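(* Let $K$ be a field of characteristic $0$, let $E$ be the infinite-dimensional unitary Grassmann algebra over $K$ with even part $E_0$, let $A=\begin{pmatrix} E_0 & E\\ 0 & E\end{pmatrix}$, and for $k\geq1$ let $F_k(A)=K\langle x_1,\dots,x_k\rangle/(K\langle x_1,\dots,x_k\rangle\cap T(A))$. If $n\geq 2$ is even, then the polynomial \[[x_1,x_2][x_3,x_4]\cdots[x_{n+3},x_{n+4}]\] is a polynomial identity of both $F_n(A)$ and $F_{n+1}(A)$.
   Context: All algebras are associative and unitary over $K$; $K\langle X\rangle$ is the free unitary associative algebra on $X=\{x_1,x_2,\dots\}$, and $T(A)$ is the ideal of polynomial identities of $A$. $E$ is generated by anticommuting $e_1,e_2,\dots$ and $E_0$ is the span of basis products of even length. $[a,b]=ab-ba$. *)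

theory Defs
  imports Main
begin

section \<open>Grassmann algebra E over K (basis e_S, S a finite subset of nat)\<close>

type_synonym 'k grass = "nat set \<Rightarrow> 'k"

definition grass :: "'k::field grass set" where
  "grass = {x. finite {S. x S \<noteq> 0} \<and> (\<forall>S. x S \<noteq> 0 \<longrightarrow> finite S)}"

text \<open>E_0: span of basis products of even length\<close>
definition grass_even :: "'k::field grass set" where
  "grass_even = {x \<in> grass. \<forall>S. x S \<noteq> 0 \<longrightarrow> even (card S)}"

text \<open>sign of e_S e_T = sign * e_(S \<union> T) for disjoint S T\<close>
definition gsign :: "nat set \<Rightarrow> nat set \<Rightarrow> 'k::field" where
  "gsign S T = (-1) ^ card {(s,t). s \<in> S \<and> t \<in> T \<and> t < s}"

definition gmult :: "'k::field grass \<Rightarrow> 'k grass \<Rightarrow> 'k grass" where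
  "gmult x y = (\<lambda>U. \<Sum>(S,T) \<in> {(S,T). x S \<noteq> 0 \<and> y T \<noteq> 0 \<and> S \<inter> T = {} \<and> S \<union> T = U}.
                    gsign S T * x S * y T)"

definition gone :: "'k::field grass" where "gone = (\<lambda>S. if S = {} then 1 else 0)"
definition gzero :: "'k::field grass" where "gzero = (\<lambda>S. 0)"
definition gadd :: "'k::field grass \<Rightarrow> 'k grass \<Rightarrow> 'k grass" where
  "gadd x y = (\<lambda>S. x S + y S)"

section \<open>The algebra A = (E_0 E; 0 E), elements (a,b,c) ~ matrix [[a,b],[0,c]]\<close>

type_synonym 'k tri = "'k grass \<times> 'k grass \<times> 'k grass"

definition tri_carrier :: "'k::field tri set" where
  "tri_carrier = {(a,b,c). a \<in> grass_even \<and> b \<in> grass \<and> c \<in> grass}"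

definition tmult :: "'k::field tri \<Rightarrow> 'k tri \<Rightarrow> 'k tri" where
  "tmult X Y = (case X of (a,b,c) \<Rightarrow> case Y of (a',b',c') \<Rightarrow>
      (gmult a a', gadd (gmult a b') (gmult b c'), gmult c c'))"

definition tone :: "'k::field tri" where "tone = (gone, gzero, gone)"
definition tzero :: "'k::field tri" where "tzero = (gzero, gzero, gzero)"

definition tprod :: "'k::field tri list \<Rightarrow> 'k tri" where
  "tprod xs = foldr tmult xs tone"

section \<open>Free algebra K<X>, X = {x_1, x_2, ...}: finitely supported functions on words\<close>

type_synonym 'k ncpoly = "nat list \<Rightarrow> 'k"

definition polys :: "'k::field ncpoly set" where
  "polys = {p. finite {w. p w \<noteq> 0}}"

definition polys_in :: "nat \<Rightarrow> 'k::field ncpoly set" where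
  "polys_in k = {p \<in> polys. \<forall>w. p w \<noteq> 0 \<longrightarrow> set w \<subseteq> {1..k}}"

definition pmult :: "'k::field ncpoly \<Rightarrow> 'k ncpoly \<Rightarrow> 'k ncpoly" where
  "pmult p q = (\<lambda>w. \<Sum>i\<le>length w. p (take i w) * q (drop i w))"

definition pone :: "'k::field ncpoly" where "pone = (\<lambda>w. if w = [] then 1 else 0)"
definition pvar :: "nat \<Rightarrow> 'k::field ncpoly" where "pvar i = (\<lambda>w. if w = [i] then 1 else 0)"
definition psub :: "'k::field ncpoly \<Rightarrow> 'k ncpoly \<Rightarrow> 'k ncpoly" where
  "psub p q = (\<lambda>w. p w - q w)"

definition pprod :: "'k::field ncpoly list \<Rightarrow> 'k ncpoly" where
  "pprod ps = foldr pmult ps pone"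

definition pcomm :: "'k::field ncpoly \<Rightarrow> 'k ncpoly \<Rightarrow> 'k ncpoly" where
  "pcomm p q = psub (pmult p q) (pmult q p)"

definition psubst :: "'k::field ncpoly \<Rightarrow> (nat \<Rightarrow> 'k ncpoly) \<Rightarrow> 'k ncpoly" where
  "psubst f g = (\<lambda>w. \<Sum>u\<in>{u. f u \<noteq> 0}. f u * pprod (map g u) w)"

definition teval :: "'k::field ncpoly \<Rightarrow> (nat \<Rightarrow> 'k tri) \<Rightarrow> 'k tri" where
  "teval p \<phi> =
    ((\<lambda>S. \<Sum>w\<in>{w. p w \<noteq> 0}. p w * fst (tprod (map \<phi> w)) S),
     (\<lambda>S. \<Sum>w\<in>{w. p w \<noteq> 0}. p w * fst (snd (tprod (map \<phi> w))) S),
     (\<lambda>S. \<Sum>w\<in>{w. p w \<noteq> 0}. p w * snd (snd (tprod (map \<phi> w))) S))"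

definition T_A :: "'k::field ncpoly set" where
  "T_A = {p \<in> polys. \<forall>\<phi>. (\<forall>i. \<phi> i \<in> tri_carrier) \<longrightarrow> teval p \<phi> = tzero}"

text \<open>f is a polynomial identity of F_k(A) = K<x_1..x_k> / (K<x_1..x_k> \<inter> T(A)):
  for all elements g_i + I of F_k(A) substituted for x_i, f(g_1,...) lies in the ideal,
  i.e. f(g_1, g_2, ...) \<in> T(A).\<close>
definition is_PI_of_F :: "nat \<Rightarrow> 'k::field ncpoly \<Rightarrow> bool" where
  "is_PI_of_F k f \<longleftrightarrow> (\<forall>g. (\<forall>i. g i \<in> polys_in k) \<longrightarrow> psubst f g \<in> T_A)"

definition commprod :: "nat \<Rightarrow> 'k::field ncpoly" where
  "commprod n = pprod (map (\<lambda>j. pcomm (pvar (2*j+1)) (pvar (2*j+2))) [0..<(n+4) div 2])"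

end

theory Submission
  imports Defs
begin



definition cnt :: "nat set \<Rightarrow> nat set \<Rightarrow> nat" where
  "cnt S T = card {(s,t). s \<in> S \<and> t \<in> T \<and> t < s}"

lemma gsign_cnt: "gsign S T = (-1) ^ cnt S T"
  by (simp add: gsign_def cnt_def)

lemma cnt_fin: "finite A \<Longrightarrow> finite B \<Longrightarrow> finite {(s,t). s \<in> A \<and> t \<in> B \<and> t < s}"
  by (rule finite_subset[of _ "A \<times> B"]) auto

lemma cnt_Un_left:
  assumes "finite A" "finite B" "finite C" "A \<inter> B = {}"
  shows "cnt (A \<union> B) C = cnt A C + cnt B C"
proof -
  have "{(s,t). s \<in> A \<union> B \<and> t \<in> C \<and> t < s} =
        {(s,t). s \<in> A \<and> t \<in> C \<and> t < s} \<union> {(s,t). s \<in> B \<and> t \<in> C \<and> t < s}" by auto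
  moreover have "{(s,t). s \<in> A \<and> t \<in> C \<and> t < s} \<inter> {(s,t). s \<in> B \<and> t \<in> C \<and> t < s} = {}"
    using assms(4) by auto
  ultimately show ?thesis unfolding cnt_def
    by (simp add: card_Un_disjoint cnt_fin assms)
qed

lemma cnt_Un_right:
  assumes "finite A" "finite B" "finite C" "B \<inter> C = {}"
  shows "cnt A (B \<union> C) = cnt A B + cnt A C"
proof -
  have "{(s,t). s \<in> A \<and> t \<in> B \<union> C \<and> t < s} =
        {(s,t). s \<in> A \<and> t \<in> B \<and> t < s} \<union> {(s,t). s \<in> A \<and> t \<in> C \<and> t < s}" by auto
  moreover have "{(s,t). s \<in> A \<and> t \<in> B \<and> t < s} \<inter> {(s,t). s \<in> A \<and> t \<in> C \<and> t < s} = {}"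
    using assms(4) by auto
  ultimately show ?thesis unfolding cnt_def
    by (simp add: card_Un_disjoint cnt_fin assms)
qed

lemma cnt_swap:
  assumes "finite A" "finite B" "A \<inter> B = {}"
  shows "cnt A B + cnt B A = card A * card B"
proof -
  have e1: "{(t,s). t \<in> B \<and> s \<in> A \<and> s < t} = prod.swap ` {(s,t). s \<in> A \<and> t \<in> B \<and> s < t}"
    by (auto simp: image_iff)
  have "card {(t,s). t \<in> B \<and> s \<in> A \<and> s < t} = card {(s,t). s \<in> A \<and> t \<in> B \<and> s < t}"
    unfolding e1 by (rule card_image) (simp add: inj_on_def)
  moreover have "A \<times> B = {(s,t). s \<in> A \<and> t \<in> B \<and> t < s} \<union> {(s,t). s \<in> A \<and> t \<in> B \<and> s < t}"
    using assms(3) by (auto simp: linorder_neq_iff)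
  moreover have "{(s,t). s \<in> A \<and> t \<in> B \<and> t < s} \<inter> {(s,t). s \<in> A \<and> t \<in> B \<and> s < t} = {}" by auto
  moreover have "finite {(s,t). s \<in> A \<and> t \<in> B \<and> s < t}"
    by (rule finite_subset[of _ "A \<times> B"]) (auto simp: assms)
  ultimately have "card (A \<times> B) = cnt A B + cnt B A"
    unfolding cnt_def by (simp add: card_Un_disjoint cnt_fin assms)
  then show ?thesis by (simp add: card_cartesian_product)
qed

lemma gsign_Un_left: "finite A \<Longrightarrow> finite B \<Longrightarrow> finite C \<Longrightarrow> A \<inter> B = {} \<Longrightarrow>
   (gsign (A \<union> B) C :: 'k::field) = gsign A C * gsign B C"
  by (simp add: gsign_cnt cnt_Un_left power_add)

lemma gsign_Un_right: "finite A \<Longrightarrow> finite B \<Longrightarrow> finite C \<Longrightarrow> B \<inter> C = {} \<Longrightarrow>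
   (gsign A (B \<union> C) :: 'k::field) = gsign A B * gsign A C"
  by (simp add: gsign_cnt cnt_Un_right power_add)

lemma gsign_sq: "(gsign A B :: 'k::field) * gsign A B = 1"
  by (simp add: gsign_cnt power_add[symmetric] flip: mult_2)

lemma gsign_swap: "finite A \<Longrightarrow> finite B \<Longrightarrow> A \<inter> B = {} \<Longrightarrow>
   (gsign A B :: 'k::field) = (-1) ^ (card A * card B) * gsign B A"
proof -
  assume a: "finite A" "finite B" "A \<inter> B = {}"
  have "(gsign A B :: 'k) * gsign B A = (-1) ^ (card A * card B)"
    using cnt_swap[OF a] by (simp add: gsign_cnt power_add[symmetric])
  moreover have "(gsign A B :: 'k) = gsign A B * (gsign B A * gsign B A)"
    using gsign_sq[of B A] by (metis mult.right_neutral)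
  ultimately show ?thesis by (metis mult.assoc)
qed

lemma gsign_empty1[simp]: "gsign {} A = 1" by (simp add: gsign_def)
lemma gsign_empty2[simp]: "gsign A {} = 1" by (simp add: gsign_def)

lemma gsign_assoc:
  assumes "R \<subseteq> S" "S \<subseteq> U" "finite U"
  shows "(gsign R (U-R) :: 'k::field) * gsign (S-R) (U-S) = gsign S (U-S) * gsign R (S-R)"
proof -
  have f: "finite R" "finite S" "finite (S-R)" "finite (U-S)" using assms by (auto intro: finite_subset)
  have "U - R = (S-R) \<union> (U-S)" using assms by auto
  then have 1: "(gsign R (U-R) :: 'k) = gsign R (S-R) * gsign R (U-S)"
    using gsign_Un_right[of R "S-R" "U-S"] f by auto
  have "S = R \<union> (S-R)" using assms by auto
  then have 2: "(gsign S (U-S) :: 'k) = gsign R (U-S) * gsign (S-R) (U-S)"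
    using gsign_Un_left[of R "S-R" "U-S"] f by (metis Diff_disjoint)
  show ?thesis unfolding 1 2 by (simp add: algebra_simps)
qed




lemma grassD1: "x \<in> grass \<Longrightarrow> finite {S. x S \<noteq> 0}" by (simp add: grass_def)
lemma grassD2: "x \<in> grass \<Longrightarrow> x S \<noteq> 0 \<Longrightarrow> finite S" by (simp add: grass_def)
lemma grassD3: "x \<in> grass \<Longrightarrow> infinite S \<Longrightarrow> x S = 0" using grassD2 by blast

lemma Un_Diff_disj: "a \<inter> b = {} \<Longrightarrow> a \<union> b - a = b" by auto

definition gm :: "'k::field grass \<Rightarrow> 'k grass \<Rightarrow> 'k grass" where
  "gm x y U = (if finite U then \<Sum>S\<in>Pow U. gsign S (U-S) * x S * y (U-S) else 0)"

lemma gmult_eq: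
  assumes x: "x \<in> grass" and y: "y \<in> grass"
  shows "gmult x y U = gm x y U"
proof (cases "finite U")
  case True
  let ?P = "{(S,T). x S \<noteq> 0 \<and> y T \<noteq> 0 \<and> S \<inter> T = {} \<and> S \<union> T = U}"
  let ?Q = "{S \<in> Pow U. x S \<noteq> 0 \<and> y (U-S) \<noteq> 0}"
  have "gmult x y U = (\<Sum>(S,T)\<in>?P. gsign S T * x S * y T)" by (simp add: gmult_def)
  also have "\<dots> = (\<Sum>S\<in>?Q. gsign S (U-S) * x S * y (U-S))"
    by (rule sum.reindex_bij_witness[where i="\<lambda>S. (S, U-S)" and j = "fst"]) (auto simp: Un_Diff_disj)
  also have "\<dots> = (\<Sum>S\<in>Pow U. gsign S (U-S) * x S * y (U-S))"
    by (rule sum.mono_neutral_left) (auto simp: True)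
  finally show ?thesis by (simp add: gm_def True)
next
  case False
  have e: "{(S,T). x S \<noteq> 0 \<and> y T \<noteq> 0 \<and> S \<inter> T = {} \<and> S \<union> T = U} = {}"
    using False grassD2[OF x] grassD2[OF y] by auto
  show ?thesis unfolding gmult_def gm_def e using False by simp
qed

lemma gm_nonzero:
  assumes "gm x y U \<noteq> 0"
  shows "finite U \<and> (\<exists>S. S \<subseteq> U \<and> x S \<noteq> 0 \<and> y (U-S) \<noteq> 0)"
proof -
  have f: "finite U" using assms by (auto simp: gm_def split: if_splits)
  then have "(\<Sum>S\<in>Pow U. gsign S (U-S) * x S * y (U-S)) \<noteq> 0" using assms by (simp add: gm_def)
  then obtain S where "S \<in> Pow U" "gsign S (U-S) * x S * y (U-S) \<noteq> 0"
    using sum.not_neutral_contains_not_neutral by blast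
  then show ?thesis using f by auto
qed

lemma gm_grass:
  assumes x: "x \<in> grass" and y: "y \<in> grass"
  shows "gm x y \<in> grass"
proof -
  have "{U. gm x y U \<noteq> 0} \<subseteq> (\<lambda>(S,T). S \<union> T) ` ({S. x S \<noteq> 0} \<times> {T. y T \<noteq> 0})"
  proof
    fix U assume "U \<in> {U. gm x y U \<noteq> 0}"
    then obtain S where "S \<subseteq> U" "x S \<noteq> 0" "y (U-S) \<noteq> 0" using gm_nonzero by blast
    then show "U \<in> (\<lambda>(S,T). S \<union> T) ` ({S. x S \<noteq> 0} \<times> {T. y T \<noteq> 0})"
      by (auto simp: image_iff intro!: bexI[of _ "(S, U-S)"])
  qed
  then have "finite {U. gm x y U \<noteq> 0}"
    by (rule finite_subset) (simp add: grassD1[OF x] grassD1[OF y])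
  moreover have "\<forall>U. gm x y U \<noteq> 0 \<longrightarrow> finite U" using gm_nonzero by blast
  ultimately show ?thesis by (simp add: grass_def)
qed

lemma gm_assoc:
  fixes x y z :: "'k::field grass"
  assumes x: "x \<in> grass" and y: "y \<in> grass" and z: "z \<in> grass"
  shows "gm (gm x y) z U = gm x (gm y z) U"
proof (cases "finite U")
  case False then show ?thesis by (simp add: gm_def)
next
  case True
  have fS: "S \<in> Pow U \<Longrightarrow> finite S" for S using True finite_subset by auto
  have "gm (gm x y) z U = (\<Sum>S\<in>Pow U. gsign S (U-S) * (\<Sum>R\<in>Pow S. gsign R (S-R) * x R * y (S-R)) * z (U-S))"
    using fS by (simp add: gm_def True)
  also have "\<dots> = (\<Sum>S\<in>Pow U. \<Sum>R\<in>Pow S. gsign S (U-S) * gsign R (S-R) * x R * y (S-R) * z (U-S))"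
    by (simp add: sum_distrib_left sum_distrib_right algebra_simps)
  also have "\<dots> = (\<Sum>(S,R)\<in>Sigma (Pow U) Pow. gsign S (U-S) * gsign R (S-R) * x R * y (S-R) * z (U-S))"
    by (rule sum.Sigma) (auto simp: True fS)
  also have "\<dots> = (\<Sum>(R,T)\<in>Sigma (Pow U) (\<lambda>R. Pow (U-R)). gsign R (U-R) * gsign T (U-R-T) * x R * y T * z (U-R-T))"
  proof (rule sum.reindex_bij_witness[where i="\<lambda>(R,T). (R \<union> T, R)" and j = "\<lambda>(S,R). (R, S-R)"])
    fix a assume "a \<in> Sigma (Pow U) Pow"
    then obtain S R where a: "a = (S,R)" "R \<subseteq> S" "S \<subseteq> U" by auto
    have e: "U - R - (S - R) = U - S" using a by auto
    have sg: "gsign R (U-R) * gsign (S-R) (U-S) = (gsign S (U-S) * gsign R (S-R) :: 'k)"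
      by (rule gsign_assoc[OF a(2) a(3) True])
    have t: "gsign R (U-R) * gsign (S-R) (U-S) * x R * y (S-R) * z (U-S) = gsign S (U-S) * gsign R (S-R) * x R * y (S-R) * z (U-S)"
      using sg by simp
    then show "(case (case a of (S, R) \<Rightarrow> (R, S - R)) of
          (R, T) \<Rightarrow> gsign R (U - R) * gsign T (U - R - T) * x R * y T * z (U - R - T)) =
         (case a of (S, R) \<Rightarrow> gsign S (U - S) * gsign R (S - R) * x R * y (S - R) * z (U - S))"
      using a e t by simp
  qed auto
  also have "\<dots> = (\<Sum>R\<in>Pow U. \<Sum>T\<in>Pow (U-R). gsign R (U-R) * gsign T (U-R-T) * x R * y T * z (U-R-T))"
    by (rule sum.Sigma[symmetric]) (auto simp: True)
  also have "\<dots> = (\<Sum>R\<in>Pow U. gsign R (U-R) * x R * (\<Sum>T\<in>Pow (U-R). gsign T (U-R-T) * y T * z (U-R-T)))"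
    by (simp add: sum_distrib_left sum_distrib_right algebra_simps)
  also have "\<dots> = gm x (gm y z) U"
    by (simp add: gm_def True)
  finally show ?thesis .
qed




definition sc :: "'k::field \<Rightarrow> 'k grass" where "sc r = (\<lambda>S. if S = {} then r else 0)"

lemma sc_grass: "sc r \<in> grass" by (simp add: grass_def sc_def)
lemma gone_sc: "gone = sc 1" by (simp add: gone_def sc_def fun_eq_iff)
lemma gzero_grass: "(\<lambda>S. 0) \<in> grass" by (simp add: grass_def)

lemma gm_sc_left: "x \<in> grass \<Longrightarrow> gm (sc r) x U = r * x U"
proof (cases "finite U")
  case True
  have "gm (sc r) x U = (\<Sum>S\<in>Pow U. gsign S (U-S) * sc r S * x (U-S))" by (simp add: gm_def True)
  also have "\<dots> = (\<Sum>S\<in>Pow U. if S = {} then r * x U else 0)"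
    by (rule sum.cong) (auto simp: sc_def)
  finally have "gm (sc r) x U = (\<Sum>S\<in>Pow U. if S = {} then r * x U else 0)" .
  then show ?thesis using True by simp
next
  case False
  assume "x \<in> grass"
  then show ?thesis using False by (simp add: gm_def grassD3)
qed

lemma gm_sc_right: "x \<in> grass \<Longrightarrow> gm x (sc r) U = r * x U"
proof (cases "finite U")
  case True
  have "gm x (sc r) U = (\<Sum>S\<in>Pow U. gsign S (U-S) * x S * sc r (U-S))" by (simp add: gm_def True)
  also have "\<dots> = (\<Sum>S\<in>Pow U. if S = U then r * x U else 0)"
    by (rule sum.cong) (auto simp: sc_def)
  finally have "gm x (sc r) U = (\<Sum>S\<in>Pow U. if S = U then r * x U else 0)" .
  then show ?thesis using True by simp
next
  case False
  assume "x \<in> grass"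
  then show ?thesis using False by (simp add: gm_def grassD3)
qed

lemma gm_add_left: "gm (\<lambda>S. x S + y S) z U = gm x z U + gm y z U"
  by (simp add: gm_def sum.distrib algebra_simps)
lemma gm_add_right: "gm x (\<lambda>S. y S + z S) U = gm x y U + gm x z U"
  by (simp add: gm_def sum.distrib algebra_simps)

lemma ddiff: "S \<subseteq> U \<Longrightarrow> U - (U - S) = S" by auto

lemma gm_swap_expr:
  assumes "finite U"
  shows "gm y x U = (\<Sum>S\<in>Pow U. (-1) ^ (card S * card (U-S)) * gsign S (U-S) * x S * y (U-S))"
proof -
  have "gm y x U = (\<Sum>S\<in>Pow U. gsign S (U-S) * y S * x (U-S))" by (simp add: gm_def assms)
  also have "\<dots> = (\<Sum>S\<in>Pow U. gsign (U-S) (U-(U-S)) * y (U-S) * x (U-(U-S)))"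
    by (rule sum.reindex_bij_witness[where i="\<lambda>S. U - S" and j="\<lambda>S. U - S"]) (auto simp: ddiff)
  also have "\<dots> = (\<Sum>S\<in>Pow U. (-1) ^ (card S * card (U-S)) * gsign S (U-S) * x S * y (U-S))"
  proof (rule sum.cong)
    fix S assume "S \<in> Pow U"
    then have s: "S \<subseteq> U" "U - (U - S) = S" "finite S" "finite (U-S)" using assms by (auto intro: finite_subset)
    have "gsign (U-S) S = ((-1) ^ (card (U-S) * card S) * gsign S (U-S) :: 'a)"
      by (rule gsign_swap) (use s in auto)
    then show "gsign (U-S) (U-(U-S)) * y (U-S) * x (U-(U-S)) = (-1) ^ (card S * card (U-S)) * gsign S (U-S) * x S * y (U-S)"
      using s by (simp add: mult_ac)
  qed simp
  finally show ?thesis .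
qed

lemma evsupp_dummy: True by simp

definition evsupp :: "'k::field grass \<Rightarrow> bool" where "evsupp x = (\<forall>S. x S \<noteq> 0 \<longrightarrow> even (card S))"
definition odsupp :: "'k::field grass \<Rightarrow> bool" where "odsupp x = (\<forall>S. x S \<noteq> 0 \<longrightarrow> odd (card S))"

lemma gm_even_comm:
  assumes "evsupp x" shows "gm y x U = gm x y U"
proof (cases "finite U")
  case True
  have "gm y x U = (\<Sum>S\<in>Pow U. (-1) ^ (card S * card (U-S)) * gsign S (U-S) * x S * y (U-S))"
    by (rule gm_swap_expr[OF True])
  also have "\<dots> = gm x y U"
    by (simp add: gm_def True) (rule sum.cong, use assms in \<open>auto simp: evsupp_def\<close>)
  finally show ?thesis .
qed (simp add: gm_def)

lemma gm_odd_anti: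
  assumes "odsupp x" "odsupp y" shows "gm y x U = - gm x y U"
proof (cases "finite U")
  case True
  have "gm y x U = (\<Sum>S\<in>Pow U. (-1) ^ (card S * card (U-S)) * gsign S (U-S) * x S * y (U-S))"
    by (rule gm_swap_expr[OF True])
  also have "\<dots> = - gm x y U"
  proof -
    have "(-1) ^ (card S * card (U-S)) * gsign S (U-S) * x S * y (U-S) = - (gsign S (U-S) * x S * y (U-S))" for S
    proof (cases "x S = 0 \<or> y (U-S) = 0")
      case False
      then have "odd (card S * card (U-S))" using assms by (auto simp: odsupp_def)
      then show ?thesis by simp
    qed auto
    then show ?thesis by (simp add: gm_def True sum_negf[symmetric])
  qed
  finally show ?thesis .
qed (simp add: gm_def)

lemma gm_even_even:
  assumes "evsupp x" "evsupp y" shows "evsupp (gm x y)"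
  unfolding evsupp_def
proof (intro allI impI)
  fix U assume "gm x y U \<noteq> 0"
  then obtain S where s: "finite U" "S \<subseteq> U" "x S \<noteq> 0" "y (U-S) \<noteq> 0" using gm_nonzero by blast
  then have "card U = card S + card (U-S)"
    by (metis card_Diff_subset card_mono diff_add_inverse finite_subset le_add_diff_inverse)
  then show "even (card U)" using assms s by (simp add: evsupp_def)
qed




typedef (overloaded) ('k::field) gr = "grass :: 'k grass set" morphisms Rg Ag
  by (rule exI[of _ "\<lambda>S. 0"]) (simp add: grass_def)

setup_lifting type_definition_gr

lemma gadd_grass: "x \<in> grass \<Longrightarrow> y \<in> grass \<Longrightarrow> (\<lambda>S. x S + y S) \<in> grass"
proof -
  assume x: "x \<in> grass" and y: "y \<in> grass"
  have "{S. x S + y S \<noteq> 0} \<subseteq> {S. x S \<noteq> 0} \<union> {S. y S \<noteq> 0}" by auto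
  then have "finite {S. x S + y S \<noteq> 0}" by (rule finite_subset) (simp add: grassD1 x y)
  moreover have "x S + y S \<noteq> 0 \<Longrightarrow> finite S" for S using grassD2[OF x] grassD2[OF y] by force
  ultimately show ?thesis by (simp add: grass_def)
qed

lemma gneg_grass: "x \<in> grass \<Longrightarrow> (\<lambda>S. - x S) \<in> grass"
  by (simp add: grass_def)

lemma gmult_grass: "x \<in> grass \<Longrightarrow> y \<in> grass \<Longrightarrow> gmult x y \<in> grass"
proof -
  assume x: "x \<in> grass" and y: "y \<in> grass"
  have "gmult x y = gm x y" using gmult_eq[OF x y] by (simp add: fun_eq_iff)
  then show ?thesis using gm_grass[OF x y] by simp
qed

instantiation gr :: (field) ring_1
begin
lift_definition zero_gr :: "'a gr" is "\<lambda>S. 0" by (rule gzero_grass)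
lift_definition one_gr :: "'a gr" is "sc 1" by (rule sc_grass)
lift_definition plus_gr :: "'a gr \<Rightarrow> 'a gr \<Rightarrow> 'a gr" is "\<lambda>x y S. x S + y S" by (rule gadd_grass)
lift_definition uminus_gr :: "'a gr \<Rightarrow> 'a gr" is "\<lambda>x S. - x S" by (rule gneg_grass)
lift_definition minus_gr :: "'a gr \<Rightarrow> 'a gr \<Rightarrow> 'a gr" is "\<lambda>x y S. x S - y S"
  by (drule gadd_grass, erule gneg_grass) simp
lift_definition times_gr :: "'a gr \<Rightarrow> 'a gr \<Rightarrow> 'a gr" is "gm" by (rule gm_grass)

lemma Rg_times_gm: "Rg (a * b) = gm (Rg a) (Rg b)" by (simp add: times_gr.rep_eq)

instance
proof
  fix a b c :: "'a gr"
  show "a + b + c = a + (b + c)" by transfer (simp add: add.assoc)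
  show "a + b = b + a" by transfer (simp add: add.commute)
  show "0 + a = a" by transfer simp
  show "- a + a = 0" by transfer simp
  show "a - b = a + - b" by transfer simp
  show "a * b * c = a * (b * c)" by transfer (simp add: fun_eq_iff gm_assoc)
  show "1 * a = a" by transfer (simp add: fun_eq_iff gm_sc_left)
  show "a * 1 = a" by transfer (simp add: fun_eq_iff gm_sc_right)
  show "(a + b) * c = a * c + b * c" by transfer (simp add: fun_eq_iff gm_add_left)
  show "a * (b + c) = a * b + a * c" by transfer (simp add: fun_eq_iff gm_add_right)
  show "(0::'a gr) \<noteq> 1" by transfer (simp add: fun_eq_iff sc_def)
qed
end

lemma Rg_times: "Rg (a * b) = gmult (Rg a) (Rg b)"
  using gmult_eq[OF Rg[of a] Rg[of b]] by (simp add: fun_eq_iff times_gr.rep_eq)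
lemma Rg_plus: "Rg (a + b) = gadd (Rg a) (Rg b)" by (simp add: plus_gr.rep_eq gadd_def)
lemma Rg_one: "Rg 1 = gone" by (simp add: one_gr.rep_eq gone_sc)
lemma Rg_zero: "Rg 0 = gzero" by (simp add: zero_gr.rep_eq gzero_def)
lemma Rg_sum: "Rg (sum f A) S = (\<Sum>a\<in>A. Rg (f a) S)"
  by (induction A rule: infinite_finite_induct) (auto simp: zero_gr.rep_eq plus_gr.rep_eq)

lift_definition kap :: "'k::field \<Rightarrow> 'k gr" is sc by (rule sc_grass)

lemma Rg_kap_mult: "Rg (kap r * x) S = r * Rg x S"
  by transfer (simp add: gm_sc_left)

lemma kap_add: "kap (a + b) = kap a + kap b" by transfer (auto simp: sc_def)
lemma kap_mult: "kap (a * b) = kap a * kap b"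
  apply transfer
  apply (simp only: fun_eq_iff gm_sc_left[OF sc_grass])
  apply (simp add: sc_def)
  done
lemma kap_one: "kap 1 = 1" by transfer simp

lift_definition Ev :: "'k::field gr \<Rightarrow> bool" is evsupp .
lift_definition Od :: "'k::field gr \<Rightarrow> bool" is odsupp .

lemma Ev_central: "Ev a \<Longrightarrow> a * b = b * a"
  by transfer (simp add: fun_eq_iff gm_even_comm)
lemma Od_anti: "Od a \<Longrightarrow> Od b \<Longrightarrow> b * a = - (a * b)"
  by transfer (rule ext, blast intro: gm_odd_anti)
lemma Ev_mult: "Ev a \<Longrightarrow> Ev b \<Longrightarrow> Ev (a * b)"
  by transfer (rule gm_even_even)
lemma Ev_add: "Ev a \<Longrightarrow> Ev b \<Longrightarrow> Ev (a + b)"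
  apply transfer
  apply (clarsimp simp: evsupp_def)
  by (metis add_0)
lemma Ev_neg: "Ev a \<Longrightarrow> Ev (- a)"
  by transfer (auto simp: evsupp_def)
lemma Ev_kap: "Ev (kap r)"
  by transfer (auto simp: evsupp_def sc_def)
lemma Ev_one: "Ev 1"
  using Ev_kap[of 1] kap_one by metis
lemma Ev_zero: "Ev 0"
  by transfer (auto simp: evsupp_def)

lift_definition evp :: "'k::field gr \<Rightarrow> 'k gr" is "\<lambda>x S. if even (card S) then x S else 0"
  by (auto simp: grass_def elim: finite_subset[rotated])
lift_definition odp :: "'k::field gr \<Rightarrow> 'k gr" is "\<lambda>x S. if odd (card S) then x S else 0"
  by (auto simp: grass_def elim: finite_subset[rotated])

lemma evp_odp: "x = evp x + odp x" by transfer auto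
lemma Ev_evp: "Ev (evp x)" by transfer (auto simp: evsupp_def)
lemma Od_odp: "Od (odp x)" by transfer (auto simp: odsupp_def)

lemma Od_sq: "Od (a :: 'k::field_char_0 gr) \<Longrightarrow> a * a = 0"
proof -
  assume "Od a"
  then have "a * a = - (a * a)" using Od_anti[of a a] by simp
  then have "Rg (a * a) S = - Rg (a * a) S" for S by (metis uminus_gr.rep_eq)
  then have "Rg (a * a) S + Rg (a * a) S = 0" for S by (metis right_minus)
  then have "Rg (a * a) S = 0" for S by (simp add: mult_2[symmetric])
  then have "Rg (a * a) = Rg 0" by (simp add: fun_eq_iff zero_gr.rep_eq)
  then show ?thesis by (simp add: Rg_inject)
qed




datatype 'a ut = UT (ua: 'a) (ub: 'a) (uc: 'a)

instantiation ut :: (ring_1) ring_1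
begin
definition "0 = UT 0 0 0"
definition "1 = UT 1 0 1"
definition "x + y = UT (ua x + ua y) (ub x + ub y) (uc x + uc y)"
definition "- x = UT (- ua x) (- ub x) (- uc x)"
definition "x - y = UT (ua x - ua y) (ub x - ub y) (uc x - uc y)"
definition "x * y = UT (ua x * ua y) (ua x * ub y + ub x * uc y) (uc x * uc y)"
instance
proof
  fix a b c :: "'a ut"
  show "a + b + c = a + (b + c)" by (simp add: plus_ut_def add.assoc)
  show "a + b = b + a" by (simp add: plus_ut_def add.commute)
  show "0 + a = a" by (simp add: plus_ut_def zero_ut_def)
  show "- a + a = 0" by (simp add: plus_ut_def zero_ut_def uminus_ut_def)
  show "a - b = a + - b" by (simp add: plus_ut_def minus_ut_def uminus_ut_def)
  show "a * b * c = a * (b * c)" by (simp add: times_ut_def algebra_simps)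
  show "1 * a = a" by (simp add: times_ut_def one_ut_def)
  show "a * 1 = a" by (simp add: times_ut_def one_ut_def)
  show "(a + b) * c = a * c + b * c" by (simp add: times_ut_def plus_ut_def algebra_simps)
  show "a * (b + c) = a * b + a * c" by (simp add: times_ut_def plus_ut_def algebra_simps)
  show "(0::'a ut) \<noteq> 1" by (simp add: zero_ut_def one_ut_def)
qed
end

lemma ua_hom: "ua (x + y) = ua x + ua y" "ua (x * y) = ua x * ua y" "ua 1 = 1" "ua 0 = 0"
  by (simp_all add: plus_ut_def times_ut_def one_ut_def zero_ut_def)
lemma uc_hom: "uc (x + y) = uc x + uc y" "uc (x * y) = uc x * uc y" "uc 1 = 1" "uc 0 = 0"
  by (simp_all add: plus_ut_def times_ut_def one_ut_def zero_ut_def)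
lemma ub_simps: "ub (x + y) = ub x + ub y" "ub (x * y) = ua x * ub y + ub x * uc y" "ub 1 = 0" "ub 0 = 0"
  by (simp_all add: plus_ut_def times_ut_def one_ut_def zero_ut_def)

lemma ut_eqI: "ua x = ua y \<Longrightarrow> ub x = ub y \<Longrightarrow> uc x = uc y \<Longrightarrow> x = y"
  by (cases x; cases y) simp

definition evl :: "('k::field \<Rightarrow> 'r::ring_1) \<Rightarrow> 'k ncpoly \<Rightarrow> (nat \<Rightarrow> 'r) \<Rightarrow> 'r" where
  "evl \<kappa> p \<phi> = (\<Sum>w\<in>{w. p w \<noteq> 0}. \<kappa> (p w) * prod_list (map \<phi> w))"

lemma pmult_supp:
  "{w. pmult p q w \<noteq> 0} \<subseteq> (\<lambda>(u,v). u @ v) ` ({u. p u \<noteq> 0} \<times> {v. q v \<noteq> 0})"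
proof
  fix w assume "w \<in> {w. pmult p q w \<noteq> 0}"
  then have "(\<Sum>i\<le>length w. p (take i w) * q (drop i w)) \<noteq> 0" by (simp add: pmult_def)
  then obtain i where "p (take i w) * q (drop i w) \<noteq> 0"
    using sum.not_neutral_contains_not_neutral by blast
  then show "w \<in> (\<lambda>(u,v). u @ v) ` ({u. p u \<noteq> 0} \<times> {v. q v \<noteq> 0})"
    by (intro image_eqI[of _ _ "(take i w, drop i w)"]) auto
qed

lemma polysD: "p \<in> polys \<Longrightarrow> finite {w. p w \<noteq> 0}" by (simp add: polys_def)

lemma pmult_polys: "p \<in> polys \<Longrightarrow> q \<in> polys \<Longrightarrow> pmult p q \<in> polys"
  unfolding polys_def mem_Collect_eq by (rule finite_subset[OF pmult_supp]) simp

lemma pone_polys: "pone \<in> polys" by (simp add: polys_def pone_def)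
lemma pvar_polys: "pvar i \<in> polys" by (simp add: polys_def pvar_def)
lemma psub_polys: "p \<in> polys \<Longrightarrow> q \<in> polys \<Longrightarrow> psub p q \<in> polys"
  unfolding polys_def psub_def mem_Collect_eq
  by (rule finite_subset[of _ "{w. p w \<noteq> 0} \<union> {w. q w \<noteq> 0}"]) auto

lemma pprod_polys: "(\<forall>p\<in>set ps. p \<in> polys) \<Longrightarrow> pprod ps \<in> polys"
  by (induction ps) (auto simp: pprod_def pone_polys pmult_polys)

locale scal =
  fixes \<kappa> :: "'k::field \<Rightarrow> 'r::ring_1"
  assumes k_add: "\<kappa> (a + b) = \<kappa> a + \<kappa> b"
    and k_mult: "\<kappa> (a * b) = \<kappa> a * \<kappa> b"
    and k_one: "\<kappa> 1 = 1"
    and k_central: "\<kappa> a * x = x * \<kappa> a"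
begin

lemma k_zero: "\<kappa> 0 = 0"
  using k_add[of 0 0] by simp

lemma k_neg: "\<kappa> (- a) = - \<kappa> a"
  using k_add[of a "-a"] k_zero by (simp add: eq_neg_iff_add_eq_0 add.commute)

lemma k_diff: "\<kappa> (a - b) = \<kappa> a - \<kappa> b"
  using k_add[of a "-b"] k_neg by simp

lemma k_sum: "\<kappa> (sum f A) = (\<Sum>a\<in>A. \<kappa> (f a))"
  by (induction A rule: infinite_finite_induct) (auto simp: k_zero k_add)

lemma evl_superset:
  assumes "finite W" "{w. p w \<noteq> 0} \<subseteq> W"
  shows "evl \<kappa> p \<phi> = (\<Sum>w\<in>W. \<kappa> (p w) * prod_list (map \<phi> w))"
  unfolding evl_def by (rule sum.mono_neutral_left) (use assms in \<open>auto simp: k_zero\<close>)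

lemma evl_pmult:
  assumes p: "p \<in> polys" and q: "q \<in> polys"
  shows "evl \<kappa> (pmult p q) \<phi> = evl \<kappa> p \<phi> * evl \<kappa> q \<phi>"
proof -
  let ?Sp = "{u. p u \<noteq> 0}" and ?Sq = "{v. q v \<noteq> 0}"
  let ?W = "(\<lambda>(u,v). u @ v) ` (?Sp \<times> ?Sq)"
  let ?PL = "\<lambda>w. prod_list (map \<phi> w)"
  let ?h = "\<lambda>u v. \<kappa> (p u) * ?PL u * (\<kappa> (q v) * ?PL v)"
  have fp: "finite ?Sp" and fq: "finite ?Sq" using p q by (auto simp: polys_def)
  have fW: "finite ?W" using fp fq by simp
  have "evl \<kappa> (pmult p q) \<phi> = (\<Sum>w\<in>?W. \<kappa> (pmult p q w) * ?PL w)"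
    by (rule evl_superset[OF fW pmult_supp])
  also have "\<dots> = (\<Sum>w\<in>?W. \<Sum>i\<in>{..length w}. ?h (take i w) (drop i w))"
  proof (rule sum.cong)
    fix w :: "nat list"
    have "\<kappa> (pmult p q w) * ?PL w = (\<Sum>i\<in>{..length w}. \<kappa> (p (take i w)) * \<kappa> (q (drop i w)) * ?PL w)"
      by (simp add: pmult_def k_sum k_mult sum_distrib_right)
    also have "\<dots> = (\<Sum>i\<in>{..length w}. ?h (take i w) (drop i w))"
    proof (rule sum.cong)
      fix i
      have "?PL w = ?PL (take i w) * ?PL (drop i w)"
        by (metis append_take_drop_id map_append prod_list.append)
      then show "\<kappa> (p (take i w)) * \<kappa> (q (drop i w)) * ?PL w = ?h (take i w) (drop i w)"
        by (simp add: mult.assoc k_central[of "q (drop i w)"])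
    qed simp
    finally show "\<kappa> (pmult p q w) * ?PL w = (\<Sum>i\<in>{..length w}. ?h (take i w) (drop i w))" .
  qed simp
  also have "\<dots> = (\<Sum>(w,i)\<in>Sigma ?W (\<lambda>w. {..length w}). ?h (take i w) (drop i w))"
    by (rule sum.Sigma) (auto simp: fW)
  also have "\<dots> = (\<Sum>(w,i)\<in>{(w,i)\<in>Sigma ?W (\<lambda>w. {..length w}). p (take i w) \<noteq> 0 \<and> q (drop i w) \<noteq> 0}. ?h (take i w) (drop i w))"
    by (rule sum.mono_neutral_right) (auto simp: fW k_zero)
  also have "\<dots> = (\<Sum>(u,v)\<in>?Sp \<times> ?Sq. ?h u v)"
    by (rule sum.reindex_bij_witness[where i="\<lambda>(u,v). (u @ v, length u)" and j="\<lambda>(w,i). (take i w, drop i w)"])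
       (auto simp: min_def simp del: take_append drop_append, simp_all)
  also have "\<dots> = (\<Sum>u\<in>?Sp. \<kappa> (p u) * ?PL u) * (\<Sum>v\<in>?Sq. \<kappa> (q v) * ?PL v)"
    by (simp add: sum_product sum.cartesian_product)
  finally show ?thesis by (simp add: evl_def)
qed

lemma evl_psub:
  assumes p: "p \<in> polys" and q: "q \<in> polys"
  shows "evl \<kappa> (psub p q) \<phi> = evl \<kappa> p \<phi> - evl \<kappa> q \<phi>"
proof -
  let ?W = "{w. p w \<noteq> 0} \<union> {w. q w \<noteq> 0}"
  have fW: "finite ?W" using p q by (auto simp: polys_def)
  have "evl \<kappa> (psub p q) \<phi> = (\<Sum>w\<in>?W. \<kappa> (psub p q w) * prod_list (map \<phi> w))"
    by (rule evl_superset[OF fW]) (auto simp: psub_def)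
  moreover have "evl \<kappa> p \<phi> = (\<Sum>w\<in>?W. \<kappa> (p w) * prod_list (map \<phi> w))"
    by (rule evl_superset[OF fW]) auto
  moreover have "evl \<kappa> q \<phi> = (\<Sum>w\<in>?W. \<kappa> (q w) * prod_list (map \<phi> w))"
    by (rule evl_superset[OF fW]) auto
  ultimately show ?thesis
    by (simp add: psub_def k_diff left_diff_distrib sum_subtractf)
qed

lemma evl_pone: "evl \<kappa> pone \<phi> = 1"
proof -
  have "{w. pone w \<noteq> (0::'k)} = {[]}" by (auto simp: pone_def)
  then show ?thesis by (simp add: evl_def pone_def k_one)
qed

lemma evl_pvar: "evl \<kappa> (pvar i) \<phi> = \<phi> i"
proof -
  have "{w. pvar i w \<noteq> (0::'k)} = {[i]}" by (auto simp: pvar_def)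
  then show ?thesis by (simp add: evl_def pvar_def k_one)
qed

lemma evl_pprod: "(\<forall>p\<in>set ps. p \<in> polys) \<Longrightarrow> evl \<kappa> (pprod ps) \<phi> = prod_list (map (\<lambda>p. evl \<kappa> p \<phi>) ps)"
proof (induction ps)
  case Nil then show ?case by (simp add: pprod_def evl_pone)
next
  case (Cons p ps)
  have "pprod (p # ps) = pmult p (pprod ps)" by (simp add: pprod_def)
  then show ?case using Cons pprod_polys[of ps] by (simp add: evl_pmult)
qed

lemma evl_pcomm: "p \<in> polys \<Longrightarrow> q \<in> polys \<Longrightarrow>
  evl \<kappa> (pcomm p q) \<phi> = evl \<kappa> p \<phi> * evl \<kappa> q \<phi> - evl \<kappa> q \<phi> * evl \<kappa> p \<phi>"
  by (simp add: pcomm_def evl_psub pmult_polys evl_pmult)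

lemma psubst_supp:
  "{w. psubst f g w \<noteq> 0} \<subseteq> (\<Union>u\<in>{u. f u \<noteq> 0}. {w. pprod (map g u) w \<noteq> 0})"
proof
  fix w assume "w \<in> {w. psubst f g w \<noteq> 0}"
  then have "(\<Sum>u\<in>{u. f u \<noteq> 0}. f u * pprod (map g u) w) \<noteq> 0" by (simp add: psubst_def)
  then obtain u where "u \<in> {u. f u \<noteq> 0}" "f u * pprod (map g u) w \<noteq> 0"
    using sum.not_neutral_contains_not_neutral by blast
  then show "w \<in> (\<Union>u\<in>{u. f u \<noteq> 0}. {w. pprod (map g u) w \<noteq> 0})" by auto
qed

lemma psubst_polys: "f \<in> polys \<Longrightarrow> (\<forall>i. g i \<in> polys) \<Longrightarrow> psubst f g \<in> polys"
  unfolding polys_def mem_Collect_eq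
  by (rule finite_subset[OF psubst_supp])
     (auto intro!: polysD pprod_polys simp: polys_def)

lemma evl_psubst:
  assumes f: "f \<in> polys" and g: "\<forall>i. g i \<in> polys"
  shows "evl \<kappa> (psubst f g) \<phi> = evl \<kappa> f (\<lambda>i. evl \<kappa> (g i) \<phi>)"
proof -
  let ?Sf = "{u. f u \<noteq> 0}"
  let ?Q = "\<lambda>u. pprod (map g u)"
  let ?W = "\<Union>u\<in>?Sf. {w. ?Q u w \<noteq> 0}"
  let ?PL = "\<lambda>w. prod_list (map \<phi> w)"
  have Qp: "?Q u \<in> polys" for u using g by (auto intro!: pprod_polys)
  have fW: "finite ?W" using f Qp by (auto simp: polys_def)
  have "evl \<kappa> (psubst f g) \<phi> = (\<Sum>w\<in>?W. \<kappa> (psubst f g w) * ?PL w)"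
    by (rule evl_superset[OF fW psubst_supp])
  also have "\<dots> = (\<Sum>w\<in>?W. \<Sum>u\<in>?Sf. \<kappa> (f u) * (\<kappa> (?Q u w) * ?PL w))"
    by (simp add: psubst_def k_sum k_mult sum_distrib_right mult.assoc)
  also have "\<dots> = (\<Sum>u\<in>?Sf. \<kappa> (f u) * (\<Sum>w\<in>?W. \<kappa> (?Q u w) * ?PL w))"
    by (simp add: sum.swap[of _ ?W] sum_distrib_left)
  also have "\<dots> = (\<Sum>u\<in>?Sf. \<kappa> (f u) * evl \<kappa> (?Q u) \<phi>)"
  proof (rule sum.cong)
    fix u assume "u \<in> ?Sf"
    then have "{w. ?Q u w \<noteq> 0} \<subseteq> ?W" by auto
    then show "\<kappa> (f u) * (\<Sum>w\<in>?W. \<kappa> (?Q u w) * ?PL w) = \<kappa> (f u) * evl \<kappa> (?Q u) \<phi>"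
      using evl_superset[OF fW] by simp
  qed simp
  also have "\<dots> = (\<Sum>u\<in>?Sf. \<kappa> (f u) * prod_list (map (\<lambda>i. evl \<kappa> (g i) \<phi>) u))"
    using g by (simp add: evl_pprod comp_def)
  also have "\<dots> = evl \<kappa> f (\<lambda>i. evl \<kappa> (g i) \<phi>)"
    by (rule evl_def[symmetric])
  finally show ?thesis .
qed

end

lemma evl_hom:
  assumes hadd: "\<And>x y. h (x + y) = h x + h y" and hmult: "\<And>x y. h (x * y) = h x * h y"
    and h1: "h 1 = 1" and h0: "h 0 = 0" and hk: "\<And>a. h (\<kappa>1 a) = \<kappa>2 a"
  shows "h (evl \<kappa>1 p \<phi>) = evl \<kappa>2 p (\<lambda>i. h (\<phi> i))"
proof -
  have hs: "h (sum f A) = (\<Sum>a\<in>A. h (f a))" for f :: "_ \<Rightarrow> 'a" and A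
    by (induction A rule: infinite_finite_induct) (auto simp: h0 hadd)
  have hp: "h (prod_list xs) = prod_list (map h xs)" for xs
    by (induction xs) (auto simp: h1 hmult)
  show ?thesis unfolding evl_def hs by (simp add: hmult hk hp comp_def)
qed

lemma scal_ut:
  assumes "scal \<kappa>"
  shows "scal (\<lambda>r. UT (\<kappa> r) 0 (\<kappa> r))"
proof -
  interpret scal \<kappa> by fact
  show ?thesis
  proof
    fix a b :: 'a and x :: "'b ut"
    show "UT (\<kappa> (a + b)) 0 (\<kappa> (a + b)) = UT (\<kappa> a) 0 (\<kappa> a) + UT (\<kappa> b) 0 (\<kappa> b)"
      by (simp add: plus_ut_def k_add)
    show "UT (\<kappa> (a * b)) 0 (\<kappa> (a * b)) = UT (\<kappa> a) 0 (\<kappa> a) * UT (\<kappa> b) 0 (\<kappa> b)"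
      by (simp add: times_ut_def k_mult)
    show "UT (\<kappa> 1) 0 (\<kappa> 1) = 1" by (simp add: one_ut_def k_one)
    show "UT (\<kappa> a) 0 (\<kappa> a) * x = x * UT (\<kappa> a) 0 (\<kappa> a)"
      by (simp add: times_ut_def k_central)
  qed
qed




interpretation kapS: scal "kap :: 'k::field \<Rightarrow> 'k gr"
  by standard (rule kap_add, rule kap_mult, rule kap_one, rule Ev_central[OF Ev_kap])

lemma odd_move:
  assumes "Od y" "\<forall>z\<in>set L. Od z"
  shows "y * prod_list L = prod_list L * y \<or> y * prod_list L = - (prod_list L * y)"
  using assms(2)
proof (induction L)
  case (Cons z L)
  then have IH: "y * prod_list L = prod_list L * y \<or> y * prod_list L = - (prod_list L * y)"
    and oz: "Od z" by auto
  have "y * prod_list (z # L) = (y * z) * prod_list L" by (simp add: mult.assoc)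
  also have "\<dots> = - (z * (y * prod_list L))" using Od_anti[OF oz assms(1)] by (simp add: mult.assoc)
  finally have e: "y * prod_list (z # L) = - (z * (y * prod_list L))" .
  from IH show ?case
  proof
    assume "y * prod_list L = prod_list L * y"
    then show ?thesis using e by (simp add: mult.assoc)
  next
    assume "y * prod_list L = - (prod_list L * y)"
    then show ?thesis using e by (simp add: mult.assoc)
  qed
qed simp

lemma dup_zero:
  fixes y :: "nat \<Rightarrow> 'k::field_char_0 gr"
  assumes od: "\<forall>j. Od (y j)" and nd: "\<not> distinct js"
  shows "prod_list (map y js) = 0"
proof -
  obtain xs a ys zs where js: "js = xs @ [a] @ ys @ [a] @ zs" using not_distinct_decomp[OF nd] by blast
  let ?Y = "prod_list (map y ys)"
  have "y a * ?Y * y a = 0"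
  proof -
    have "y a * ?Y = ?Y * y a \<or> y a * ?Y = - (?Y * y a)" using odd_move[of "y a" "map y ys"] od by auto
    moreover have "?Y * y a * y a = 0" using Od_sq[of "y a"] od by (simp add: mult.assoc)
    ultimately show ?thesis by auto
  qed
  then have "prod_list (map y xs) * (y a * ?Y * y a) * prod_list (map y zs) = 0" by simp
  then show ?thesis using js by (simp add: mult.assoc)
qed

lemma rearr: "(c'::'a::ring_1) * P = P * c' \<Longrightarrow> c * P * (c' * P') = (c * c') * (P * P')"
  by (metis mult.assoc)

inductive_set Dset :: "(nat \<Rightarrow> 'k::field_char_0 gr) \<Rightarrow> nat \<Rightarrow> nat \<Rightarrow> 'k gr set" for y N d where
  D0: "0 \<in> Dset y N d"
| Dt: "Ev c \<Longrightarrow> d \<le> length js \<Longrightarrow> set js \<subseteq> {1..N} \<Longrightarrow> c * prod_list (map y js) \<in> Dset y N d"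
| Dadd: "u \<in> Dset y N d \<Longrightarrow> v \<in> Dset y N d \<Longrightarrow> u + v \<in> Dset y N d"

lemma Dset_neg: "u \<in> Dset y N d \<Longrightarrow> - u \<in> Dset y N d"
proof (induction rule: Dset.induct)
  case (Dt c js)
  then have "(- c) * prod_list (map y js) \<in> Dset y N d" by (intro Dset.Dt Ev_neg)
  then show ?case by simp
next
  case D0 show ?case by (simp add: Dset.D0)
next
  case (Dadd u v)
  have "- (u + v) = - u + - v" by (rule minus_add_distrib)
  then show ?case using Dadd.IH Dset.Dadd by metis
qed

lemma Dset_diff: "u \<in> Dset y N d \<Longrightarrow> v \<in> Dset y N d \<Longrightarrow> u - v \<in> Dset y N d"
  unfolding diff_conv_add_uminus by (rule Dset.Dadd[OF _ Dset_neg])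

lemma Dset_mono: "u \<in> Dset y N d' \<Longrightarrow> d \<le> d' \<Longrightarrow> u \<in> Dset y N d"
  by (induction rule: Dset.induct) (blast intro: Dset.D0, metis Dset.Dt le_trans, blast intro: Dset.Dadd)

lemma Dset_mult:
  assumes "u \<in> Dset y N d" "v \<in> Dset y N e"
  shows "u * v \<in> Dset y N (d + e)"
  using assms(1)
proof (induction rule: Dset.induct)
  case D0 then show ?case by (simp add: Dset.D0)
next
  case (Dadd u1 u2) then show ?case by (simp add: distrib_right Dset.Dadd)
next
  case (Dt c js)
  show ?case using assms(2)
  proof (induction rule: Dset.induct)
    case D0 then show ?case by (simp add: Dset.D0)
  next
    case (Dadd v1 v2) then show ?case by (simp add: distrib_left Dset.Dadd)
  next
    case (Dt c' js')
    have "c * prod_list (map y js) * (c' * prod_list (map y js')) = (c * c') * prod_list (map y (js @ js'))"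
      using rearr[OF Ev_central[OF Dt(1), of "prod_list (map y js)"]] by simp
    moreover have "(c * c') * prod_list (map y (js @ js')) \<in> Dset y N (d + e)"
      using Dt `Ev c` `d \<le> length js` `set js \<subseteq> {1..N}` by (intro Dset.Dt Ev_mult) auto
    ultimately show ?case by simp
  qed
qed

lemma Dset_sum: "(\<And>a. a \<in> A \<Longrightarrow> f a \<in> Dset y N d) \<Longrightarrow> sum f A \<in> Dset y N d"
  by (induction A rule: infinite_finite_induct) (auto intro: Dset.intros)

lemma Dset_zero:
  assumes od: "\<forall>j. Od (y j)" and "N < d" and "u \<in> Dset y N d"
  shows "u = 0"
  using assms(3)
proof (induction rule: Dset.induct)
  case (Dt c js)
  have "\<not> distinct js"
  proof
    assume "distinct js"
    then have "length js = card (set js)" by (simp add: distinct_card)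
    also have "\<dots> \<le> card {1..N}" using Dt(3) by (intro card_mono) auto
    finally show False using Dt(2) `N < d` by simp
  qed
  then show ?case using dup_zero[OF od] by simp
qed auto

lemma Dset_comm:
  assumes "u \<in> Dset y N 0" "v \<in> Dset y N 0"
  shows "u * v - v * u \<in> Dset y N 2"
  using assms(1)
proof (induction rule: Dset.induct)
  case D0 then show ?case by (simp add: Dset.D0)
next
  case (Dadd u1 u2)
  have "(u1 + u2) * v - v * (u1 + u2) = (u1 * v - v * u1) + (u2 * v - v * u2)"
    by (simp add: algebra_simps)
  then show ?case using Dadd by (simp add: Dset.Dadd)
next
  case (Dt c js)
  show ?case using assms(2)
  proof (induction rule: Dset.induct)
    case D0 then show ?case by (simp add: Dset.D0)
  next
    case (Dadd v1 v2)
    have "c * prod_list (map y js) * (v1 + v2) - (v1 + v2) * (c * prod_list (map y js)) =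
       (c * prod_list (map y js) * v1 - v1 * (c * prod_list (map y js))) +
       (c * prod_list (map y js) * v2 - v2 * (c * prod_list (map y js)))"
      by (simp add: algebra_simps)
    then show ?case using Dadd by (simp add: Dset.Dadd)
  next
    case (Dt c' js')
    let ?P = "prod_list (map y js)" and ?P' = "prod_list (map y js')"
    have e1: "c * ?P * (c' * ?P') = (c * c') * prod_list (map y (js @ js'))"
      using rearr[OF Ev_central[OF Dt(1), of ?P]] by simp
    have e2: "c' * ?P' * (c * ?P) = (c * c') * prod_list (map y (js' @ js))"
      using rearr[OF Ev_central[OF `Ev c`, of ?P']] Ev_central[OF `Ev c`, of c'] by simp
    have ec: "Ev (c * c')" using Dt(1) `Ev c` by (simp add: Ev_mult)
    show ?case
    proof (cases "js = [] \<or> js' = []")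
      case True
      then show ?thesis using e1 e2 by (auto simp: Dset.D0)
    next
      case False
      then have l1: "length (js @ js') \<ge> 2" and l2: "length (js' @ js) \<ge> 2"
        by (cases js; cases js'; simp)+
      have "(c * c') * prod_list (map y (js @ js')) \<in> Dset y N 2"
        by (rule Dset.Dt[OF ec l1]) (use Dt `set js \<subseteq> {1..N}` in auto)
      moreover have "(c * c') * prod_list (map y (js' @ js)) \<in> Dset y N 2"
        by (rule Dset.Dt[OF ec l2]) (use Dt `set js \<subseteq> {1..N}` in auto)
      ultimately
      show ?thesis using e1 e2 by (simp add: Dset_diff)
    qed
  qed
qed

lemma Dset_prod_list:
  assumes "\<forall>x\<in>set L. x \<in> Dset y N 2"
  shows "prod_list L \<in> Dset y N (2 * length L)"
  using assms
proof (induction L)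
  case Nil
  have "1 * prod_list (map y []) \<in> Dset y N 0" by (rule Dset.Dt) (auto simp: Ev_one)
  then show ?case by simp
next
  case (Cons x L)
  then have "x * prod_list L \<in> Dset y N (2 + 2 * length L)" by (intro Dset_mult) auto
  then show ?case by simp
qed

lemma Dset_one: "1 \<in> Dset y N 0"
proof -
  have "1 * prod_list (map y []) \<in> Dset y N 0" by (rule Dset.Dt) (auto simp: Ev_one)
  then show ?thesis by simp
qed

lemma Dset_kap: "kap r \<in> Dset y N 0"
proof -
  have "kap r * prod_list (map y []) \<in> Dset y N 0" by (rule Dset.Dt) (auto simp: Ev_kap)
  then show ?thesis by simp
qed

lemma Dset_gen:
  assumes "j \<in> {1..N}" and that: "z = f j"
  shows "z \<in> Dset (\<lambda>k. odp (f k)) N 0"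
proof -
  have a: "evp z * prod_list (map (\<lambda>k. odp (f k)) []) \<in> Dset (\<lambda>k. odp (f k)) N 0"
    by (rule Dset.Dt) (auto simp: Ev_evp)
  have b: "1 * prod_list (map (\<lambda>k. odp (f k)) [j]) \<in> Dset (\<lambda>k. odp (f k)) N 0"
    by (rule Dset.Dt) (use assms in \<open>auto simp: Ev_one\<close>)
  have "z = evp z + odp (f j)" using evp_odp[of z] that by simp
  then show ?thesis using Dset.Dadd[OF a b] by simp
qed

lemma evl_Dset:
  assumes "G \<in> polys_in N" "\<forall>j\<in>{1..N}. z j \<in> Dset y N 0"
  shows "evl kap G z \<in> Dset y N 0"
proof -
  have pl: "set w \<subseteq> {1..N} \<Longrightarrow> prod_list (map z w) \<in> Dset y N 0" for w
  proof (induction w)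
    case Nil then show ?case by (simp add: Dset_one)
  next
    case (Cons a w)
    then have "z a \<in> Dset y N 0" "prod_list (map z w) \<in> Dset y N 0" using assms(2) by auto
    then show ?case using Dset_mult[of "z a" y N 0 "prod_list (map z w)" 0] by simp
  qed
  show ?thesis unfolding evl_def
  proof (rule Dset_sum)
    fix w assume "w \<in> {w. G w \<noteq> 0}"
    then have "prod_list (map z w) \<in> Dset y N 0" using assms(1) pl by (auto simp: polys_in_def)
    then show "kap (G w) * prod_list (map z w) \<in> Dset y N 0"
      using Dset_mult[OF Dset_kap[of "G w" y N]] by fastforce
  qed
qed

lemma evl_Ev:
  assumes "\<forall>j. Ev (z j)"
  shows "Ev (evl kap G z)"
proof -
  have s: "(\<And>a. a \<in> A \<Longrightarrow> Ev (f a)) \<Longrightarrow> Ev (sum f A)" for f :: "nat list \<Rightarrow> 'a gr" and A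
    by (induction A rule: infinite_finite_induct) (auto intro: Ev_add Ev_zero)
  have pl: "Ev (prod_list (map z w))" for w
    by (induction w) (auto intro: Ev_mult Ev_one assms[rule_format])
  show ?thesis unfolding evl_def by (rule s) (auto intro: Ev_mult Ev_kap pl)
qed




definition toUT :: "'k::field tri \<Rightarrow> 'k gr ut" where
  "toUT X = (case X of (a,b,c) \<Rightarrow> UT (Ag a) (Ag b) (Ag c))"
definition fromUT :: "'k::field gr ut \<Rightarrow> 'k tri" where
  "fromUT X = (Rg (ua X), Rg (ub X), Rg (uc X))"
definition kA :: "'k::field \<Rightarrow> 'k gr ut" where
  "kA = (\<lambda>r. UT (kap r) 0 (kap r))"

interpretation kAS: scal "kA :: 'k::field \<Rightarrow> 'k gr ut"
  unfolding kA_def by (rule scal_ut[OF kapS.scal_axioms])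

lemma ua_sum: "ua (sum f A) = (\<Sum>a\<in>A. ua (f a))"
  by (induction A rule: infinite_finite_induct) (auto simp: ua_hom)
lemma ub_sum: "ub (sum f A) = (\<Sum>a\<in>A. ub (f a))"
  by (induction A rule: infinite_finite_induct) (auto simp: ub_simps)
lemma uc_sum: "uc (sum f A) = (\<Sum>a\<in>A. uc (f a))"
  by (induction A rule: infinite_finite_induct) (auto simp: uc_hom)
lemma ua_prod_list: "ua (prod_list xs) = prod_list (map ua xs)"
  by (induction xs) (auto simp: ua_hom)
lemma uc_prod_list: "uc (prod_list xs) = prod_list (map uc xs)"
  by (induction xs) (auto simp: uc_hom)
lemma ua_diff: "ua (x - y) = ua x - ua y" by (simp add: minus_ut_def)
lemma uc_diff: "uc (x - y) = uc x - uc y" by (simp add: minus_ut_def)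

lemma grass_even_grass: "a \<in> grass_even \<Longrightarrow> a \<in> grass" by (simp add: grass_even_def)

lemma tprod_UT:
  assumes "\<forall>i. \<phi> i \<in> tri_carrier"
  shows "tprod (map \<phi> w) = fromUT (prod_list (map (\<lambda>i. toUT (\<phi> i)) w))"
proof (induction w)
  case Nil
  show ?case by (simp add: tprod_def tone_def fromUT_def ua_hom ub_simps uc_hom Rg_one Rg_zero)
next
  case (Cons i w)
  obtain a b c where abc: "\<phi> i = (a,b,c)" by (cases "\<phi> i")
  have "\<phi> i \<in> tri_carrier" using assms by simp
  then have g: "a \<in> grass" "b \<in> grass" "c \<in> grass" using abc
    by (auto simp: tri_carrier_def grass_even_grass)
  have "tprod (map \<phi> (i # w)) = tmult (\<phi> i) (tprod (map \<phi> w))" by (simp add: tprod_def)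
  then show ?case using Cons abc g
    by (simp add: tmult_def fromUT_def toUT_def times_ut_def Rg_times Rg_plus Ag_inverse)
qed

lemma teval_UT:
  assumes p: "p \<in> polys" and ph: "\<forall>i. \<phi> i \<in> tri_carrier"
  shows "teval p \<phi> = fromUT (evl kA p (\<lambda>i. toUT (\<phi> i)))"
  unfolding teval_def fromUT_def evl_def
  by (simp add: ua_sum ub_sum uc_sum Rg_sum kA_def times_ut_def Rg_kap_mult tprod_UT[OF ph] fromUT_def fun_eq_iff)

lemma pcomm_polys: "p \<in> polys \<Longrightarrow> q \<in> polys \<Longrightarrow> pcomm p q \<in> polys"
  by (simp add: pcomm_def psub_polys pmult_polys)

lemma commprod_polys: "commprod n \<in> polys"
  unfolding commprod_def
  by (rule pprod_polys) (auto simp: pcomm_def intro!: psub_polys pmult_polys pvar_polys)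

lemma main:
  fixes n N :: nat
  assumes ev: "even n" and NN: "N \<le> Suc n"
  shows "is_PI_of_F N (commprod n :: 'k::field_char_0 ncpoly)"
  unfolding is_PI_of_F_def T_A_def
proof (intro allI impI CollectI conjI)
  fix g :: "nat \<Rightarrow> 'k ncpoly"
  assume g: "\<forall>i. g i \<in> polys_in N"
  have gp: "\<forall>i. g i \<in> polys" using g by (simp add: polys_in_def)
  have cp: "commprod n \<in> (polys :: 'k ncpoly set)" by (rule commprod_polys)
  show "psubst (commprod n) g \<in> polys" using kAS.psubst_polys[OF cp gp] .
  fix \<phi> :: "nat \<Rightarrow> 'k tri"
  assume ph: "\<forall>i. \<phi> i \<in> tri_carrier"
  define \<Phi> where "\<Phi> = (\<lambda>i. toUT (\<phi> i))"
  define \<Psi> where "\<Psi> = (\<lambda>i. evl kA (g i) \<Phi>)"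
  define m where "m = (n + 4) div 2"
  define C where "C = (\<lambda>j. \<Psi> (2*j+1) * \<Psi> (2*j+2) - \<Psi> (2*j+2) * \<Psi> (2*j+1))"
  have m2: "m \<ge> 2" by (simp add: m_def)
  have e1: "evl kA (psubst (commprod n) g) \<Phi> = evl kA (commprod n) \<Psi>"
    unfolding \<Psi>_def by (rule kAS.evl_psubst[OF cp gp])
  have e2: "evl kA (commprod n) \<Psi> = prod_list (map C [0..<m])"
    unfolding commprod_def m_def[symmetric]
    by (subst kAS.evl_pprod) (auto simp: pcomm_polys pvar_polys
        kAS.evl_pcomm kAS.evl_pvar C_def comp_def)
  have l: "[0..<m] = 0 # [1..<m]" "[1..<m] = 1 # [2..<m]" using m2 by (auto simp: upt_conv_Cons numeral_2_eq_2)
  define R where "R = prod_list (map C [1..<m])"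
  have e3: "evl kA (psubst (commprod n) g) \<Phi> = C 0 * R" using e1 e2 l by (simp add: R_def)
  have hkA_a: "ua (kA a) = kap a" for a by (simp add: kA_def)
  have hkA_c: "uc (kA a) = kap a" for a by (simp add: kA_def)
  have uaPsi: "ua (\<Psi> i) = evl kap (g i) (\<lambda>k. ua (\<Phi> k))" for i
    unfolding \<Psi>_def by (rule evl_hom) (auto simp: ua_hom hkA_a)
  have ucPsi: "uc (\<Psi> i) = evl kap (g i) (\<lambda>k. uc (\<Phi> k))" for i
    unfolding \<Psi>_def by (rule evl_hom) (auto simp: uc_hom hkA_c)
  have EvPhi: "\<forall>k. Ev (ua (\<Phi> k))"
  proof
    fix k
    obtain a b c where abc: "\<phi> k = (a,b,c)" by (cases "\<phi> k")
    have "\<phi> k \<in> tri_carrier" using ph by simp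
    then have "a \<in> grass_even" using abc by (auto simp: tri_carrier_def)
    then show "Ev (ua (\<Phi> k))" using abc
      by (simp add: \<Phi>_def toUT_def Ev.rep_eq Ag_inverse grass_even_grass) (simp add: grass_even_def evsupp_def)
  qed
  have uaC: "ua (C j) = 0" for j
  proof -
    have "Ev (ua (\<Psi> (2*j+1)))" unfolding uaPsi by (rule evl_Ev[OF EvPhi])
    then have "ua (\<Psi> (2*j+1)) * ua (\<Psi> (2*j+2)) = ua (\<Psi> (2*j+2)) * ua (\<Psi> (2*j+1))"
      by (rule Ev_central)
    then show ?thesis by (simp add: C_def ua_diff ua_hom)
  qed
  have uaR: "ua R = 0" unfolding R_def l(2) by (simp add: ua_hom uaC)
  define z where "z = (\<lambda>k. uc (\<Phi> k))"
  define y where "y = (\<lambda>k. odp (z k))"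
  have zD: "\<forall>j\<in>{1..N}. z j \<in> Dset y N 0"
    unfolding y_def by (auto intro: Dset_gen)
  have PsiD: "uc (\<Psi> i) \<in> Dset y N 0" for i
    unfolding ucPsi z_def[symmetric] using g zD by (intro evl_Dset) auto
  have CD: "uc (C j) \<in> Dset y N 2" for j
    unfolding C_def uc_diff uc_hom by (rule Dset_comm[OF PsiD PsiD])
  have "prod_list (map (uc \<circ> C) [1..<m]) \<in> Dset y N (2 * length (map (uc \<circ> C) [1..<m]))"
    by (rule Dset_prod_list) (auto simp: CD)
  then have "uc R \<in> Dset y N (2 * length [1..<m])"
    unfolding R_def uc_prod_list map_map by simp
  moreover have "N < 2 * length [1..<m]" using ev NN by (auto simp: m_def elim!: evenE)
  ultimately have ucR: "uc R = 0" using Dset_zero[of y N] by (auto simp: y_def Od_odp)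
  have "C 0 * R = 0" by (rule ut_eqI) (simp_all add: ua_hom ub_simps uc_hom uaR ucR uaC)
  then have "evl kA (psubst (commprod n) g) \<Phi> = 0" using e3 by simp
  then show "teval (psubst (commprod n) g) \<phi> = tzero"
    using teval_UT[OF kAS.psubst_polys[OF cp gp] ph]
    by (simp add: \<Phi>_def fromUT_def tzero_def ua_hom ub_simps uc_hom Rg_zero)
qed

theorem proposition3p3:
  fixes n :: nat
  assumes "n \<ge> 2" and "even n"
  shows "is_PI_of_F n (commprod n :: 'k::field_char_0 ncpoly)
       \<and> is_PI_of_F (Suc n) (commprod n :: 'k::field_char_0 ncpoly)"
  using main[OF assms(2), of n] main[OF assms(2), of "Suc n"] by simp



end
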